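(* Let $\Sigma=\{t=0\}$ in $2+1$ dimensional Minkowski space-time $\mathbb{R}^{2,1}$, and let $\mathcal{H}$ be the set of future Cauchy horizons $H^+(K)$ where $K$ ranges over compact convex subsets of $\Sigma$ with nonempty interior, with the topology on $\mathcal{H}$ induced by the Hausdorff distance between the corresponding sets $K$. Then the subset of densely nondifferentiable horizons is dense in $\mathcal{H}$: for every compact convex $K\subset\Sigma$ with nonempty interior and every $\varepsilon>0$ there exists a compact convex $K'\subset\Sigma$ with Hausdorff distance $d_H(K,K')<\varepsilon$ such that the set of points at which $H^+(K')$ fails to be differentiable is dense in $H^+(K')$. *)

theory Defs
  imports "HOL-Analysis.Analysis"
begin

text \<open>Hausdorff distance (for nonempty compact sets, as used here).\<close>
definition hausdorff_dist :: "'a::metric_space set \<Rightarrow> 'a set \<Rightarrow> real" where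
  "hausdorff_dist A B = max (SUP a\<in>A. infdist a B) (SUP b\<in>B. infdist b A)"

type_synonym mpoint = "(real^2) \<times> real"

definition causal_le :: "mpoint \<Rightarrow> mpoint \<Rightarrow> bool" where
  "causal_le q p \<longleftrightarrow> snd q \<le> snd p \<and> dist (fst q) (fst p) \<le> snd p - snd q"

definition chron_lt :: "mpoint \<Rightarrow> mpoint \<Rightarrow> bool" where
  "chron_lt q p \<longleftrightarrow> dist (fst q) (fst p) < snd p - snd q"

definition causal_past :: "mpoint \<Rightarrow> mpoint set" where
  "causal_past p = {q. causal_le q p}"

definition chron_past :: "mpoint set \<Rightarrow> mpoint set" where
  "chron_past A = {q. \<exists>p\<in>A. chron_lt q p}"

definition Sigma_embed :: "(real^2) set \<Rightarrow> mpoint set" where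
  "Sigma_embed K = (\<lambda>x. (x, 0)) ` K"

text \<open>Future domain of dependence D^+(K) of K \<subseteq> Sigma: points p to the future of Sigma
  such that every past-inextendible causal curve through p meets K; in Minkowski space
  this is the set of p with t \<ge> 0 and J^-(p) \<inter> Sigma \<subseteq> K.\<close>
definition future_domain :: "(real^2) set \<Rightarrow> mpoint set" where
  "future_domain K = {p. snd p \<ge> 0 \<and> causal_past p \<inter> Sigma_embed UNIV \<subseteq> Sigma_embed K}"

definition future_cauchy_horizon :: "(real^2) set \<Rightarrow> mpoint set" where
  "future_cauchy_horizon K = closure (future_domain K) - chron_past (future_domain K)"

text \<open>A set H (achronal, hence locally a graph over space) is differentiable at p if near p
  it coincides with the graph t = g(x) of a function g differentiable at the spatial
  coordinate of p.\<close>
definition set_differentiable_at :: "mpoint set \<Rightarrow> mpoint \<Rightarrow> bool" where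
  "set_differentiable_at H p \<longleftrightarrow>
     (\<exists>r>0. \<exists>g :: real^2 \<Rightarrow> real. g differentiable (at (fst p)) \<and>
        H \<inter> ball p r = {(y, g y) | y. True} \<inter> ball p r)"

definition nondiff_points :: "mpoint set \<Rightarrow> mpoint set" where
  "nondiff_points H = {p \<in> H. \<not> set_differentiable_at H p}"

end

theory Submission
  imports Defs
begin

definition dS :: "(real^2) set \<Rightarrow> real^2 \<Rightarrow> real" where
  "dS S x = infdist x (- S)"

lemma dS_lip: "\<bar>dS S x - dS S y\<bar> \<le> dist x y"
  unfolding dS_def by (rule infdist_triangle_abs)

lemma dS_cont: "continuous_on A (dS S)"
  unfolding dS_def by (intro continuous_intros)

lemma dS_nonneg: "0 \<le> dS S x" unfolding dS_def by (rule infdist_nonneg)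

lemma dS_le: "a \<in> closure (- S) \<Longrightarrow> dS S x \<le> dist x a"
proof -
  assume a: "a \<in> closure (- S)"
  have "infdist x (closure (-S)) \<le> dist x a" by (rule infdist_le[OF a])
  moreover have "infdist x (closure (-S)) = infdist x (-S)"
    by (metis infdist_eq_setdist setdist_closure_2)
  ultimately show ?thesis unfolding dS_def by simp
qed

lemma cball_dS: assumes "x \<in> S" "closed S" shows "cball x (dS S x) \<subseteq> S"
proof (cases "dS S x = 0")
  case True then show ?thesis using assms by simp
next
  case False
  then have pos: "dS S x > 0" using dS_nonneg[of S x] by simp
  have "ball x (dS S x) \<subseteq> S"
  proof
    fix y assume y: "y \<in> ball x (dS S x)"
    show "y \<in> S"
    proof (rule ccontr)
      assume "y \<notin> S"
      then have "dS S x \<le> dist x y" unfolding dS_def by (intro infdist_le) simp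
      with y show False by simp
    qed
  qed
  then have "closure (ball x (dS S x)) \<subseteq> S" using assms(2) closure_minimal by blast
  then show ?thesis using pos by simp
qed

lemma cball_sub_dS: assumes "cball x t \<subseteq> S" "S \<noteq> UNIV" shows "t \<le> dS S x"
proof -
  have ne: "- S \<noteq> {}" using assms(2) by auto
  have "t \<le> (INF a\<in>- S. dist x a)"
  proof (rule cINF_greatest[OF ne])
    fix a assume "a \<in> - S"
    then have "a \<notin> cball x t" using assms(1) by auto
    then show "t \<le> dist x a" by simp
  qed
  then show ?thesis unfolding dS_def using infdist_notempty[OF ne] by simp
qed

lemma future_domain_char:
  assumes "closed S" "S \<noteq> UNIV"
  shows "future_domain S = {p. fst p \<in> S \<and> 0 \<le> snd p \<and> snd p \<le> dS S (fst p)}"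
proof -
  have A: "p \<in> future_domain S \<longleftrightarrow> 0 \<le> snd p \<and> cball (fst p) (snd p) \<subseteq> S" for p
  proof -
    obtain x t where p: "p = (x,t)" by fastforce
    have "causal_past p \<inter> Sigma_embed UNIV \<subseteq> Sigma_embed S \<longleftrightarrow>
          (0 \<le> t \<longrightarrow> cball x t \<subseteq> S)"
      unfolding p causal_past_def Sigma_embed_def causal_le_def
      by (auto simp: dist_commute subset_iff image_iff)
    then show ?thesis unfolding future_domain_def p by auto
  qed
  show ?thesis
  proof (intro set_eqI iffI)
    fix p assume "p \<in> future_domain S"
    then have h: "0 \<le> snd p" "cball (fst p) (snd p) \<subseteq> S" using A by auto
    then have "fst p \<in> S" by (meson centre_in_cball subsetD)
    with h cball_sub_dS[OF h(2) assms(2)] show "p \<in> {p. fst p \<in> S \<and> 0 \<le> snd p \<and> snd p \<le> dS S (fst p)}"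
      by auto
  next
    fix p assume "p \<in> {p. fst p \<in> S \<and> 0 \<le> snd p \<and> snd p \<le> dS S (fst p)}"
    then have h: "fst p \<in> S" "0 \<le> snd p" "snd p \<le> dS S (fst p)" by auto
    have "cball (fst p) (snd p) \<subseteq> cball (fst p) (dS S (fst p))" using h(3) by auto
    also have "\<dots> \<subseteq> S" by (rule cball_dS[OF h(1) assms(1)])
    finally show "p \<in> future_domain S" using A h by auto
  qed
qed

lemma horizon_char:
  assumes "closed S" "S \<noteq> UNIV"
  shows "future_cauchy_horizon S = (\<lambda>x. (x, dS S x)) ` S"
proof -
  let ?D = "{p. fst p \<in> S \<and> 0 \<le> snd p \<and> snd p \<le> dS S (fst p)}"
  have cl: "closed ?D"
  proof -
    have "?D = (S \<times> UNIV) \<inter> {p. 0 \<le> snd p} \<inter> {p. snd p \<le> dS S (fst p)}" by auto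
    moreover have "closed (S \<times> (UNIV::real set))" using assms(1) by (simp add: closed_Times)
    moreover have "closed {p::(real^2)\<times>real. 0 \<le> snd p}"
      by (intro closed_Collect_le continuous_intros)
    moreover have "closed {p::(real^2)\<times>real. snd p \<le> dS S (fst p)}"
      by (intro closed_Collect_le continuous_intros continuous_on_compose2[OF dS_cont]) auto
    ultimately show ?thesis by auto
  qed
  have D: "future_domain S = ?D" by (rule future_domain_char[OF assms])
  show ?thesis
  proof (intro set_eqI iffI)
    fix p assume "p \<in> future_cauchy_horizon S"
    then have p1: "p \<in> ?D" and p2: "p \<notin> chron_past ?D"
      unfolding future_cauchy_horizon_def D using cl by (auto simp: closure_closed)
    have "snd p = dS S (fst p)"
    proof (rule ccontr)
      assume "snd p \<noteq> dS S (fst p)"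
      then have "snd p < dS S (fst p)" using p1 by auto
      moreover have "(fst p, dS S (fst p)) \<in> ?D" using p1 dS_nonneg by auto
      ultimately have "p \<in> chron_past ?D" unfolding chron_past_def chron_lt_def
        by (intro CollectI bexI[of _ "(fst p, dS S (fst p))"]) auto
      with p2 show False by simp
    qed
    then show "p \<in> (\<lambda>x. (x, dS S x)) ` S" using p1 by (auto intro!: image_eqI[of _ _ "fst p"] prod_eqI)
  next
    fix p assume "p \<in> (\<lambda>x. (x, dS S x)) ` S"
    then obtain x where x: "x \<in> S" "p = (x, dS S x)" by auto
    have "p \<in> ?D" using x dS_nonneg by auto
    moreover have "p \<notin> chron_past ?D"
    proof
      assume "p \<in> chron_past ?D"
      then obtain q where q: "q \<in> ?D" "dist x (fst q) < snd q - dS S x"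
        unfolding chron_past_def chron_lt_def x by auto
      have "dS S (fst q) - dS S x \<le> dist x (fst q)" using dS_lip[of S "fst q" x] by (simp add: dist_commute)
      with q show False by auto
    qed
    ultimately show "p \<in> future_cauchy_horizon S"
      unfolding future_cauchy_horizon_def D using cl by (simp add: closure_closed)
  qed
qed

lemma nondiff_interior:
  assumes cl: "closed S" "S \<noteq> UNIV" and y: "y \<in> interior S"
    and nd: "\<not> dS S differentiable (at y)"
  shows "(y, dS S y) \<in> nondiff_points (future_cauchy_horizon S)"
proof -
  let ?H = "future_cauchy_horizon S"
  have H: "?H = (\<lambda>x. (x, dS S x)) ` S" by (rule horizon_char[OF cl])
  have yS: "y \<in> S" using y interior_subset by blast
  have pH: "(y, dS S y) \<in> ?H" using H yS by auto
  have "\<not> set_differentiable_at ?H (y, dS S y)"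
  proof
    assume "set_differentiable_at ?H (y, dS S y)"
    then obtain r g where r: "r > 0" and gd: "g differentiable (at y)"
      and eq: "?H \<inter> ball (y, dS S y) r = {(z, g z) | z. True} \<inter> ball (y, dS S y) r"
      unfolding set_differentiable_at_def by auto
    have "(y, dS S y) \<in> {(z, g z) | z. True}" using eq pH r by auto
    then have gy: "g y = dS S y" by auto
    have "continuous (at y) g" using gd by (rule differentiable_imp_continuous_within)
    then obtain d1 where d1: "d1 > 0" "\<And>z. dist z y < d1 \<Longrightarrow> dist (g z) (g y) < r/2"
      unfolding continuous_at_eps_delta using r by (metis half_gt_zero)
    obtain d2 where d2: "d2 > 0" "ball y d2 \<subseteq> S" using y mem_interior by blast
    define d where "d = min d1 (min d2 (r/2))"
    have dpos: "d > 0" unfolding d_def using d1 d2 r by auto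
    have agree: "g z = dS S z" if z: "z \<in> ball y d" for z
    proof -
      have zy: "dist z y < d1" "dist z y < r/2" "z \<in> S" using z d2 unfolding d_def
        by (auto simp: dist_commute)
      have "dist (z, g z) (y, dS S y) \<le> dist z y + dist (g z) (g y)"
        unfolding dist_Pair_Pair gy[symmetric] by (rule sqrt_sum_squares_le_sum_abs[THEN order_trans]) simp
      also have "\<dots> < r" using d1(2)[OF zy(1)] zy(2) by simp
      finally have "(z, g z) \<in> ball (y, dS S y) r" by (simp add: dist_commute)
      then have "(z, g z) \<in> ?H" using eq by blast
      then show ?thesis using H by auto
    qed
    from gd obtain D where D: "(g has_derivative D) (at y)" unfolding differentiable_def by auto
    have "(dS S has_derivative D) (at y)"
      by (rule has_derivative_transform_within_open[OF D, of "ball y d"]) (use dpos agree in auto)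
    then show False using nd unfolding differentiable_def by auto
  qed
  then show ?thesis unfolding nondiff_points_def using pH by auto
qed

lemma horizon_from_density:
  assumes cl: "closed S" "S \<noteq> UNIV" and cv: "convex S" and ne: "interior S \<noteq> {}"
    and dens: "interior S \<subseteq> closure {y \<in> interior S. \<not> dS S differentiable (at y)}"
  shows "future_cauchy_horizon S \<subseteq> closure (nondiff_points (future_cauchy_horizon S))"
proof -
  let ?N = "{y \<in> interior S. \<not> dS S differentiable (at y)}"
  let ?f = "\<lambda>x. (x, dS S x)"
  have sub: "?f ` ?N \<subseteq> closure (nondiff_points (future_cauchy_horizon S))"
  proof
    fix p assume "p \<in> ?f ` ?N"
    then obtain y where y: "y \<in> interior S" "\<not> dS S differentiable (at y)" "p = ?f y" by auto
    have "p \<in> nondiff_points (future_cauchy_horizon S)" using nondiff_interior[OF cl y(1,2)] y(3) by simp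
    then show "p \<in> closure (nondiff_points (future_cauchy_horizon S))" using closure_subset by blast
  qed
  have cont: "continuous_on (closure ?N) ?f"
    by (rule continuous_on_Pair[OF continuous_on_id dS_cont])
  have img: "?f ` closure ?N \<subseteq> closure (nondiff_points (future_cauchy_horizon S))"
    by (rule image_closure_subset[OF cont closed_closure sub])
  have e1: "closure (interior S) = S" using convex_closure_interior[OF cv ne] closure_closed[OF cl(1)] by simp
  have "closure (interior S) \<subseteq> closure (closure ?N)" using dens by (rule closure_mono)
  then have "S \<subseteq> closure ?N" unfolding e1 closure_closure .
  then have X: "?f ` S \<subseteq> ?f ` closure ?N" by (rule image_mono)
  show ?thesis apply (subst (1) horizon_char[OF cl]) by (rule order_trans[OF X img])
qed

definition corner :: "(real^2) set \<Rightarrow> real^2 \<Rightarrow> bool" where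
  "corner S z \<longleftrightarrow> (\<exists>v1 v2. (\<forall>x\<in>S. v1 \<bullet> (x - z) \<le> 0) \<and> (\<forall>x\<in>S. v2 \<bullet> (x - z) \<le> 0)
      \<and> v1 \<noteq> 0 \<and> v2 \<noteq> 0 \<and> (\<forall>\<mu>>0. v1 \<noteq> \<mu> *\<^sub>R v2))"

lemma normal_lemma:
  fixes y z v :: "real^2"
  assumes cb: "cball y r \<subseteq> S" and dz: "dist y z = r" and r: "r > 0" and v: "v \<noteq> 0"
    and sup: "\<forall>x\<in>S. v \<bullet> (x - z) \<le> 0"
  shows "\<exists>\<alpha>>0. v = \<alpha> *\<^sub>R (z - y)"
proof -
  let ?x = "y + (r / norm v) *\<^sub>R v"
  have nv: "norm v > 0" using v by simp
  have "?x \<in> cball y r" using r nv by (simp add: dist_norm)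
  then have "v \<bullet> (?x - z) \<le> 0" using cb sup by blast
  then have "v \<bullet> (y - z) + r * norm v \<le> 0" using nv
    by (simp add: inner_diff_right inner_add_right power2_norm_eq_inner[symmetric] power2_eq_square algebra_simps)
  then have ge: "v \<bullet> (z - y) \<ge> norm v * norm (z - y)" using dz
    by (simp add: inner_diff_right dist_norm norm_minus_commute algebra_simps)
  have "v \<bullet> (z - y) \<le> norm v * norm (z - y)" by (rule norm_cauchy_schwarz)
  with ge have "v \<bullet> (z - y) = norm v * norm (z - y)" by simp
  then have eq: "norm v *\<^sub>R (z - y) = norm (z - y) *\<^sub>R v" by (simp add: norm_cauchy_schwarz_eq)
  have nz: "norm (z - y) = r" using dz by (simp add: dist_norm norm_minus_commute)
  have "v = (1/r) *\<^sub>R (r *\<^sub>R v)" using r by simp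
  also have "r *\<^sub>R v = norm v *\<^sub>R (z - y)" using eq nz by simp
  finally have "v = (norm v / r) *\<^sub>R (z - y)" by simp
  then show ?thesis using nv r by (intro exI[of _ "norm v / r"]) simp
qed

lemma no_corner:
  fixes y z :: "real^2"
  assumes cb: "cball y r \<subseteq> S" and dz: "dist y z = r" and r: "r > 0"
  shows "\<not> corner S z"
proof
  assume "corner S z"
  then obtain v1 v2 where h: "\<forall>x\<in>S. v1 \<bullet> (x - z) \<le> 0" "\<forall>x\<in>S. v2 \<bullet> (x - z) \<le> 0"
    "v1 \<noteq> 0" "v2 \<noteq> 0" "\<forall>\<mu>>0. v1 \<noteq> \<mu> *\<^sub>R v2" unfolding corner_def by blast
  obtain a where a: "a > 0" "v1 = a *\<^sub>R (z - y)" using normal_lemma[OF cb dz r h(3) h(1)] by blast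
  obtain b where b: "b > 0" "v2 = b *\<^sub>R (z - y)" using normal_lemma[OF cb dz r h(4) h(2)] by blast
  have "v1 = (a / b) *\<^sub>R v2" using a b by simp
  moreover have "a / b > 0" using a b by simp
  ultimately show False using h(5) by blast
qed

lemma dS_closure: "infdist x (closure (- S)) = dS S x"
  unfolding dS_def by (metis infdist_eq_setdist setdist_closure_2)

lemma dS_pos:
  assumes "y \<in> interior S" "S \<noteq> UNIV"
  shows "dS S y > 0"
proof -
  have "closure (- S) \<noteq> {}" using assms(2) closure_subset by blast
  moreover have "y \<notin> closure (- S)" using assms(1) by (simp add: closure_complement)
  ultimately show ?thesis using infdist_pos_not_in_closed[of "closure (-S)" y] dS_closure by simp
qed

lemma nearest_exists:
  assumes "S \<noteq> UNIV"
  obtains z where "z \<in> closure (- S)" "dist y z = dS S y"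
proof -
  have "closure (- S) \<noteq> {}" using assms closure_subset by blast
  then obtain z where "z \<in> closure (- S)" "infdist y (closure (-S)) = dist y z"
    using infdist_attains_inf[of "closure (-S)" y] by blast
  then show ?thesis using that dS_closure by simp
qed

lemma nearest_deriv:
  fixes y z :: "real^2"
  assumes D: "(dS S has_derivative D) (at y)" and z: "z \<in> closure (- S)"
    and dz: "dist y z = dS S y" and pos: "dS S y > 0"
  shows "D = (\<lambda>h. h \<bullet> sgn (y - z))"
proof -
  have nz: "y - z \<noteq> 0" using dz pos by auto
  have N: "((\<lambda>x. norm (x - z)) has_derivative (\<lambda>h. h \<bullet> sgn (y - z))) (at y)"
    using has_derivative_compose[OF has_derivative_diff[OF has_derivative_ident has_derivative_const] has_derivative_norm[OF nz]]
    by simp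
  have F: "((\<lambda>x. norm (x - z) - dS S x) has_derivative (\<lambda>h. h \<bullet> sgn (y - z) - D h)) (at y)"
    by (rule has_derivative_diff[OF N D])
  have "eventually (\<lambda>x. norm (y - z) - dS S y \<le> norm (x - z) - dS S x) (at y)"
  proof (rule always_eventually, rule allI)
    fix x
    have "dS S x \<le> dist x z" by (rule dS_le[OF z])
    then show "norm (y - z) - dS S y \<le> norm (x - z) - dS S x" using dz by (simp add: dist_norm)
  qed
  from has_derivative_local_min[OF F this] have E: "(\<lambda>h. h \<bullet> sgn (y - z) - D h) = (\<lambda>h. 0)" .
  show ?thesis
  proof (rule ext)
    fix h show "D h = h \<bullet> sgn (y - z)" using fun_cong[OF E, of h] by simp
  qed
qed

lemma nearest_unique:
  fixes y :: "real^2"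
  assumes d: "dS S differentiable (at y)" and pos: "dS S y > 0"
    and z1: "z1 \<in> closure (- S)" "dist y z1 = dS S y"
    and z2: "z2 \<in> closure (- S)" "dist y z2 = dS S y"
  shows "z1 = z2"
proof -
  obtain D where D: "(dS S has_derivative D) (at y)" using d unfolding differentiable_def by auto
  have E: "(\<lambda>h. h \<bullet> sgn (y - z1)) = (\<lambda>h. h \<bullet> sgn (y - z2))"
    using nearest_deriv[OF D z1 pos] nearest_deriv[OF D z2 pos] by simp
  define u where "u = sgn (y - z1) - sgn (y - z2)"
  have "u \<bullet> sgn (y - z1) = u \<bullet> sgn (y - z2)" using fun_cong[OF E, of u] by simp
  then have "u \<bullet> u = 0" unfolding u_def by (simp add: inner_diff_right)
  then have sg: "sgn (y - z1) = sgn (y - z2)" unfolding u_def by simp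
  have nn: "norm (y - z1) = norm (y - z2)" using z1(2) z2(2) by (simp add: dist_norm)
  have n1: "norm (y - z1) \<noteq> 0" using z1(2) pos by (simp add: dist_norm)
  have "y - z1 = norm (y - z1) *\<^sub>R sgn (y - z1)" using n1 by (simp add: sgn_div_norm)
  also have "\<dots> = norm (y - z2) *\<^sub>R sgn (y - z2)" using sg nn by simp
  also have "\<dots> = y - z2" using n1 nn by (simp add: sgn_div_norm)
  finally have "y - z1 = y - z2" .
  then show ?thesis by simp
qed

lemma core_density:
  fixes S :: "(real^2) set" and c :: "real^2"
  assumes cpt: "compact S" and cvx: "convex S" and c: "c \<in> interior S"
    and dense: "\<And>U. open U \<Longrightarrow> U \<noteq> {} \<Longrightarrow> \<exists>e\<in>E. e \<in> U"
    and corners: "\<And>e z. e \<in> E \<Longrightarrow> e \<noteq> 0 \<Longrightarrow> z \<in> frontier S \<Longrightarrow> e \<bullet> (z - c) = 0 \<Longrightarrow> corner S z"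
  shows "interior S \<subseteq> closure {y \<in> interior S. \<not> dS S differentiable (at y)}"
proof
  fix y0 assume y0: "y0 \<in> interior S"
  have cl: "closed S" using cpt by (rule compact_imp_closed)
  have nU: "S \<noteq> UNIV" using cpt compact_imp_bounded not_bounded_UNIV by blast
  let ?CL = "closure (- S)"
  let ?N = "{y \<in> interior S. \<not> dS S differentiable (at y)}"
  show "y0 \<in> closure ?N"
    unfolding closure_approachable
  proof (intro allI impI)
    fix \<epsilon>::real assume eps: "\<epsilon> > 0"
    show "\<exists>y\<in>?N. dist y y0 < \<epsilon>"
    proof (rule ccontr)
      assume nex: "\<not> (\<exists>y\<in>?N. dist y y0 < \<epsilon>)"
      obtain \<rho>0 where rho0: "\<rho>0 > 0" "ball y0 \<rho>0 \<subseteq> interior S"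
        using y0 open_interior openE by blast
      define \<rho> where "\<rho> = min \<rho>0 \<epsilon>"
      have rho: "\<rho> > 0" "ball y0 \<rho> \<subseteq> interior S" "\<rho> \<le> \<epsilon>"
        using rho0 eps unfolding \<rho>_def by auto
      define B where "B = ball y0 \<rho>"
      have intB: "\<And>y. y \<in> B \<Longrightarrow> y \<in> interior S" using rho(2) B_def by blast
      have SB: "\<And>y. y \<in> B \<Longrightarrow> y \<in> S" using intB interior_subset by blast
      have diffB: "\<And>y. y \<in> B \<Longrightarrow> dS S differentiable (at y)"
      proof (rule ccontr)
        fix y assume y: "y \<in> B" "\<not> dS S differentiable (at y)"
        then have "dist y y0 < \<epsilon>" using rho(3) unfolding B_def by (simp add: dist_commute)
        then show False using nex y intB by blast
      qed
      have posB: "\<And>y. y \<in> B \<Longrightarrow> dS S y > 0" using intB dS_pos nU by blast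
      define Z where "Z y = (SOME z. z \<in> ?CL \<and> dist y z = dS S y)" for y
      have Zp: "Z y \<in> ?CL \<and> dist y (Z y) = dS S y" for y
      proof -
        obtain z where "z \<in> ?CL" "dist y z = dS S y" using nearest_exists[OF nU] by blast
        then have "\<exists>z. z \<in> ?CL \<and> dist y z = dS S y" by blast
        then show ?thesis unfolding Z_def by (rule someI_ex)
      qed
      have Zu: "z = Z y" if "y \<in> B" "z \<in> ?CL" "dist y z = dS S y" for y z
        using nearest_unique[OF diffB[OF that(1)] posB[OF that(1)] that(2,3)] Zp[of y] by blast
      have ZS: "Z y \<in> S" if "y \<in> S" for y
      proof -
        have "Z y \<in> cball y (dS S y)" using Zp[of y] by simp
        then show ?thesis using cball_dS[OF that cl] by blast
      qed
      have Zfr: "Z y \<in> frontier S" if "y \<in> S" for y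
        using ZS[OF that] Zp[of y] unfolding frontier_closures closure_closed[OF cl] by blast
      have Zint: "Z y \<notin> interior S" for y using Zp[of y] by (simp add: closure_complement)
      have Zcont: "continuous_on B Z"
        unfolding continuous_on_iff
      proof (intro ballI allI impI)
        fix y e assume y: "y \<in> B" and e: "(e::real) > 0"
        define C where "C = {z \<in> S \<inter> ?CL. e \<le> dist z (Z y)}"
        have Ccpt: "compact C"
        proof -
          have "C = S \<inter> (?CL \<inter> {z. e \<le> dist z (Z y)})" unfolding C_def by auto
          moreover have "closed (?CL \<inter> {z. e \<le> dist z (Z y)})"
            by (intro closed_Int closed_closure closed_Collect_le continuous_intros)
          ultimately show ?thesis using compact_Int_closed[OF cpt] by simp
        qed
        show "\<exists>d>0. \<forall>x'\<in>B. dist x' y < d \<longrightarrow> dist (Z x') (Z y) < e"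
        proof (cases "C = {}")
          case True
          show ?thesis
          proof (intro exI[of _ 1] conjI ballI impI)
            fix x' assume "x' \<in> B" "dist x' y < 1"
            then have "Z x' \<in> S \<inter> ?CL" using ZS SB Zp by blast
            then show "dist (Z x') (Z y) < e" using True unfolding C_def by force
          qed simp
        next
          case False
          have "continuous_on C (\<lambda>z. dist y z - dS S y)" by (intro continuous_intros)
          then obtain zm where zm: "zm \<in> C" "\<And>z. z \<in> C \<Longrightarrow> dist y zm - dS S y \<le> dist y z - dS S y"
            using continuous_attains_inf[OF Ccpt False] by blast
          define m where "m = dist y zm - dS S y"
          have zmC: "zm \<in> ?CL" "e \<le> dist zm (Z y)" using zm(1) unfolding C_def by auto
          have m0: "m \<ge> 0" unfolding m_def using dS_le[OF zmC(1), of y] by simp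
          have mpos: "m > 0"
          proof (rule ccontr)
            assume "\<not> m > 0"
            then have "dist y zm = dS S y" using m0 unfolding m_def by simp
            then have "zm = Z y" using Zu[OF y zmC(1)] by simp
            then show False using zmC(2) e by simp
          qed
          show ?thesis
          proof (intro exI[of _ "m/2"] conjI ballI impI)
            fix x' assume x': "x' \<in> B" "dist x' y < m/2"
            show "dist (Z x') (Z y) < e"
            proof (rule ccontr)
              assume "\<not> dist (Z x') (Z y) < e"
              then have "Z x' \<in> C" unfolding C_def using ZS[OF SB[OF x'(1)]] Zp[of x'] by auto
              then have "m \<le> dist y (Z x') - dS S y" using zm(2) unfolding m_def by blast
              moreover have "dist y (Z x') \<le> dist y x' + dist x' (Z x')" by (rule dist_triangle)
              moreover have "dist x' (Z x') = dS S x'" using Zp by blast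
              moreover have "dS S x' - dS S y \<le> dist x' y" using dS_lip[of S x' y] by simp
              ultimately have "m \<le> 2 * dist x' y" by (simp add: dist_commute)
              then show False using x'(2) by simp
            qed
          qed (use mpos in simp)
        qed
      qed
      have y0B: "y0 \<in> B" unfolding B_def using rho by simp
      have y0S: "y0 \<in> S" using SB[OF y0B] .
      define z0 where "z0 = Z y0"
      have z0fr: "z0 \<in> frontier S" unfolding z0_def using Zfr[OF y0S] .
      have z0S: "z0 \<in> S" unfolding z0_def using ZS[OF y0S] .
      have intne: "interior S \<noteq> {}" using c by blast
      obtain v where v: "v \<noteq> 0" "\<forall>x\<in>S. v \<bullet> (x - z0) \<le> 0"
      proof -
        have "convex ((\<lambda>x. x - z0) ` interior S)"
          by (rule convex_translation_subtract[OF convex_interior[OF cvx]])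
        moreover have "0 \<notin> (\<lambda>x. x - z0) ` interior S" using Zint[of y0] unfolding z0_def by auto
        ultimately obtain a where a: "a \<noteq> 0" "\<forall>x\<in>(\<lambda>x. x - z0) ` interior S. 0 \<le> a \<bullet> x"
          using separating_hyperplane_set_0 by blast
        have i1: "interior S \<subseteq> {x. 0 \<le> a \<bullet> (x - z0)}" using a(2) by auto
        have i2: "closed {x. 0 \<le> a \<bullet> (x - z0)}"
          by (intro closed_Collect_le continuous_intros)
        have "closure (interior S) \<subseteq> {x. 0 \<le> a \<bullet> (x - z0)}"
          by (rule closure_minimal[OF i1 i2])
        then have "S \<subseteq> {x. 0 \<le> a \<bullet> (x - z0)}"
          using convex_closure_interior[OF cvx intne] closure_closed[OF cl] by simp
        then show ?thesis using that[of "-a"] a(1) by auto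
      qed
      define n where "n = z0 - y0"
      have d0: "dist y0 z0 = dS S y0" unfolding z0_def using Zp by blast
      have n0: "n \<noteq> 0" using d0 posB[OF y0B] unfolding n_def by auto
      define w :: "real^2" where "w = (\<chi> i. if i = 1 then - (n $ 2) else n $ 1)"
      have nw: "n \<bullet> w = 0" by (simp add: w_def inner_vec_def sum_2)
      have w0: "w \<noteq> 0"
      proof
        assume "w = 0"
        then have "w $ 1 = 0" "w $ 2 = 0" by auto
        then have "n $ 1 = 0" "n $ 2 = 0" by (simp_all add: w_def)
        then have "n = 0" by (simp add: vec_eq_iff forall_2)
        with n0 show False ..
      qed
      define s where "s = \<rho> / (2 * norm w)"
      have spos: "s > 0" using rho w0 unfolding s_def by simp
      define y1 where "y1 = y0 + s *\<^sub>R w"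
      have dy1: "dist y0 y1 = \<rho> / 2" using w0 rho unfolding y1_def s_def by (simp add: dist_norm)
      have y1B: "y1 \<in> B" unfolding B_def using dy1 rho by simp
      have y1S: "y1 \<in> S" using SB[OF y1B] .
      have z1ne: "Z y1 \<noteq> z0"
      proof
        assume eq: "Z y1 = z0"
        obtain \<alpha> where al: "\<alpha> > 0" "v = \<alpha> *\<^sub>R (z0 - y0)"
          using normal_lemma[OF cball_dS[OF y0S cl] d0 posB[OF y0B] v(1) v(2)] by blast
        have d1: "dist y1 z0 = dS S y1" using Zp[of y1] eq by simp
        obtain \<beta> where be: "\<beta> > 0" "v = \<beta> *\<^sub>R (z0 - y1)"
          using normal_lemma[OF cball_dS[OF y1S cl] d1 posB[OF y1B] v(1) v(2)] by blast
        have zy: "z0 - y1 = n - s *\<^sub>R w" unfolding n_def y1_def by simp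
        have "\<alpha> *\<^sub>R n = v" using al unfolding n_def by simp
        also have "\<dots> = \<beta> *\<^sub>R (n - s *\<^sub>R w)" using be zy by simp
        also have "\<dots> = \<beta> *\<^sub>R n - (\<beta> * s) *\<^sub>R w" by (simp add: scaleR_diff_right)
        finally have E: "\<alpha> *\<^sub>R n = \<beta> *\<^sub>R n - (\<beta> * s) *\<^sub>R w" .
        have "n \<bullet> (\<alpha> *\<^sub>R n) = n \<bullet> (\<beta> *\<^sub>R n - (\<beta> * s) *\<^sub>R w)" using E by simp
        then have "\<alpha> * (n \<bullet> n) = \<beta> * (n \<bullet> n)" using nw by (simp add: inner_diff_right)
        moreover have "n \<bullet> n > 0" using n0 by simp
        ultimately have "\<alpha> = \<beta>" by simp
        then have "(\<beta> * s) *\<^sub>R w = 0" using E by simp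
        then show False using be(1) spos w0 by simp
      qed
      define a where "a = z0 - c"
      define b where "b = Z y1 - c"
      have z1fr: "Z y1 \<in> frontier S" using Zfr[OF y1S] .
      have z1S: "Z y1 \<in> S" using ZS[OF y1S] .
      have a0: "a \<noteq> 0" using Zint[of y0] c unfolding a_def z0_def by auto
      have b0: "b \<noteq> 0" using Zint[of y1] c unfolding b_def by auto
      have notpos: "\<not> (\<exists>\<mu>>0. b = \<mu> *\<^sub>R a)"
      proof
        assume "\<exists>\<mu>>0. b = \<mu> *\<^sub>R a"
        then obtain \<mu> where mu: "\<mu> > 0" "b = \<mu> *\<^sub>R a" by blast
        have Z1: "Z y1 = c + \<mu> *\<^sub>R a" using mu(2) unfolding b_def by (simp add: algebra_simps)
        consider "\<mu> = 1" | "\<mu> < 1" | "\<mu> > 1" by linarith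
        then show False
        proof cases
          case 1 then show False using Z1 z1ne unfolding a_def by simp
        next
          case 2
          have "z0 - (1 - \<mu>) *\<^sub>R (z0 - c) \<in> interior S"
            by (rule mem_interior_convex_shrink[OF cvx c z0S]) (use 2 mu in auto)
          moreover have "z0 - (1 - \<mu>) *\<^sub>R (z0 - c) = Z y1" using Z1 unfolding a_def
            by (simp add: algebra_simps)
          ultimately show False using Zint[of y1] by simp
        next
          case 3
          have "Z y1 - (1 - 1/\<mu>) *\<^sub>R (Z y1 - c) \<in> interior S"
            by (rule mem_interior_convex_shrink[OF cvx c z1S]) (use 3 in auto)
          moreover have "Z y1 - (1 - 1/\<mu>) *\<^sub>R (Z y1 - c) = z0"
          proof -
            have "Z y1 - (1 - 1/\<mu>) *\<^sub>R (Z y1 - c) = c + (1/\<mu>) *\<^sub>R (Z y1 - c)"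
              by (simp add: algebra_simps)
            also have "\<dots> = c + (1/\<mu>) *\<^sub>R (\<mu> *\<^sub>R a)" using Z1 by simp
            also have "\<dots> = z0" using mu(1) unfolding a_def by simp
            finally show ?thesis .
          qed
          ultimately show False using Zint[of y0] unfolding z0_def by simp
        qed
      qed
      have cs: "b \<bullet> a < norm a * norm b"
      proof -
        have le: "b \<bullet> a \<le> norm b * norm a" by (rule norm_cauchy_schwarz)
        have "b \<bullet> a \<noteq> norm b * norm a"
        proof
          assume "b \<bullet> a = norm b * norm a"
          then have "norm b *\<^sub>R a = norm a *\<^sub>R b" by (simp add: norm_cauchy_schwarz_eq)
          then have "b = (norm b / norm a) *\<^sub>R a" using a0
            by (metis divide_inverse_commute eq_vector_fraction_iff norm_eq_zero)
          moreover have "norm b / norm a > 0" using a0 b0 by simp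
          ultimately show False using notpos by blast
        qed
        with le show ?thesis by (simp add: mult.commute)
      qed
      define e0 where "e0 = (1 / norm a) *\<^sub>R a - (1 / norm b) *\<^sub>R b"
      have e0a: "a \<bullet> e0 > 0"
      proof -
        have "a \<bullet> e0 = norm a - (b \<bullet> a) / norm b" using a0
          by (simp add: e0_def inner_diff_right inner_commute power2_norm_eq_inner[symmetric] power2_eq_square)
        moreover have "(b \<bullet> a) / norm b < norm a" using cs b0 by (simp add: divide_less_eq mult.commute)
        ultimately show ?thesis by simp
      qed
      have e0b: "b \<bullet> e0 < 0"
      proof -
        have "b \<bullet> e0 = (b \<bullet> a) / norm a - norm b" using b0
          by (simp add: e0_def inner_diff_right inner_commute power2_norm_eq_inner[symmetric] power2_eq_square)
        moreover have "(b \<bullet> a) / norm a < norm b" using cs a0 by (simp add: divide_less_eq mult.commute)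
        ultimately show ?thesis by simp
      qed
      have "open ({x. a \<bullet> x > 0} \<inter> {x. b \<bullet> x < 0})"
        by (intro open_Int open_halfspace_gt open_halfspace_lt)
      moreover have "e0 \<in> {x. a \<bullet> x > 0} \<inter> {x. b \<bullet> x < 0}" using e0a e0b by simp
      ultimately obtain e where e: "e \<in> E" "a \<bullet> e > 0" "b \<bullet> e < 0" using dense by blast
      have ene: "e \<noteq> 0" using e(2) by auto
      define p where "p t = y0 + t *\<^sub>R (y1 - y0)" for t::real
      have pB: "p t \<in> B" if "t \<in> {0..1}" for t
      proof -
        have "dist y0 (p t) = t * dist y0 y1" using that unfolding p_def by (simp add: dist_norm norm_minus_commute)
        also have "\<dots> \<le> \<rho>/2" using that dy1 rho mult_left_le_one_le[of "dist y0 y1" t] by simp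
        finally show ?thesis unfolding B_def using rho by simp
      qed
      have pc: "continuous_on {0..1} p" unfolding p_def by (intro continuous_intros)
      have Zpc: "continuous_on {0..1} (\<lambda>t. Z (p t))"
        by (rule continuous_on_compose2[OF Zcont pc]) (use pB in blast)
      define f where "f t = e \<bullet> (Z (p t) - c)" for t
      have fc: "continuous_on {0..1} f" unfolding f_def by (intro continuous_intros Zpc)
      have f0: "f 0 > 0" using e(2) unfolding f_def p_def a_def z0_def by (simp add: inner_commute)
      have f1: "f 1 < 0" using e(3) unfolding f_def p_def b_def by (simp add: inner_commute)
      obtain t where t: "0 \<le> t" "t \<le> 1" "f t = 0"
        using IVT2'[of f 1 0 0, OF _ _ _ fc] f0 f1 by auto
      have ptB: "p t \<in> B" using pB t by simp
      have "corner S (Z (p t))"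
        using corners[OF e(1) ene Zfr[OF SB[OF ptB]]] t(3) unfolding f_def by simp
      moreover have "\<not> corner S (Z (p t))"
        by (rule no_corner[OF cball_dS[OF SB[OF ptB] cl] _ posB[OF ptB]]) (use Zp in blast)
      ultimately show False by simp
    qed
  qed
qed

locale gsetup =
  fixes K :: "(real^2) set" and c :: "real^2" and r M :: real
  assumes cvx: "convex K" and clK: "closed K" and rpos: "r > 0" and ballK: "ball c r \<subseteq> K"
    and Mpos: "M > 0" and bnd: "\<And>k. k \<in> K \<Longrightarrow> norm (k - c) \<le> M"
begin

definition T where "T v = {t::real. 0 < t \<and> c + (1/t) *\<^sub>R v \<in> K}"
definition G where "G v = Inf (T v)"

lemma cK: "c \<in> K" using ballK rpos by auto

lemma T_big: assumes "t > norm v / r" shows "t \<in> T v"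
proof -
  have "norm v / r \<ge> 0" using rpos by simp
  then have t: "t > 0" using assms by linarith
  have "norm v < r * t" using assms rpos by (simp add: divide_less_eq mult.commute)
  then have "norm ((1/t) *\<^sub>R v) < r" using t by (simp add: divide_less_eq mult.commute)
  then have "c + (1/t) *\<^sub>R v \<in> ball c r" by (simp add: dist_norm)
  then show ?thesis using ballK t unfolding T_def by auto
qed

lemma T_ne: "T v \<noteq> {}" using T_big[of v "norm v / r + 1"] by auto

lemma T_bdd: "bdd_below (T v)" unfolding T_def by (rule bdd_belowI[of _ 0]) auto

lemma G_le: "t \<in> T v \<Longrightarrow> G v \<le> t" unfolding G_def by (rule cInf_lower[OF _ T_bdd])

lemma G_ge: "(\<And>t. t \<in> T v \<Longrightarrow> a \<le> t) \<Longrightarrow> a \<le> G v" unfolding G_def by (rule cInf_greatest[OF T_ne])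

lemma G_upper: "G v \<le> norm v / r"
proof (rule field_le_epsilon)
  fix d :: real assume "d > 0"
  then show "G v \<le> norm v / r + d" using G_le T_big by simp
qed

lemma G_lower: "norm v / M \<le> G v"
proof (rule G_ge)
  fix t assume "t \<in> T v"
  then have t: "t > 0" "c + (1/t) *\<^sub>R v \<in> K" unfolding T_def by auto
  then have "norm ((1/t) *\<^sub>R v) \<le> M" using bnd[OF t(2)] by simp
  then have "norm v / t \<le> M" using t by simp
  then show "norm v / M \<le> t" using t Mpos by (simp add: divide_le_eq mult.commute)
qed

lemma G_nonneg: "0 \<le> G v"
proof -
  have "norm v / M \<ge> 0" using Mpos by simp
  then show ?thesis using G_lower[of v] by linarith
qed

lemma G_zero: "G 0 = 0" using G_upper[of 0] G_nonneg[of 0] by simp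

lemma G_scale: assumes "s \<ge> 0" shows "G (s *\<^sub>R v) \<le> s * G v"
proof (cases "s = 0")
  case True then show ?thesis using G_zero by simp
next
  case False
  then have s: "s > 0" using assms by simp
  have "G (s *\<^sub>R v) / s \<le> G v"
  proof (rule G_ge)
    fix t assume "t \<in> T v"
    then have t: "t > 0" "c + (1/t) *\<^sub>R v \<in> K" unfolding T_def by auto
    have "c + (1/(s*t)) *\<^sub>R (s *\<^sub>R v) = c + (1/t) *\<^sub>R v" using s by simp
    then have "s * t \<in> T (s *\<^sub>R v)" using t s unfolding T_def by simp
    then have "G (s *\<^sub>R v) \<le> s * t" by (rule G_le)
    then show "G (s *\<^sub>R v) / s \<le> t" using s by (simp add: divide_le_eq mult.commute)
  qed
  then show ?thesis using s by (simp add: divide_le_eq mult.commute)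
qed

lemma T_add: assumes "t1 \<in> T u" "t2 \<in> T v" shows "t1 + t2 \<in> T (u + v)"
proof -
  have t: "t1 > 0" "t2 > 0" "c + (1/t1) *\<^sub>R u \<in> K" "c + (1/t2) *\<^sub>R v \<in> K"
    using assms unfolding T_def by auto
  define l where "l = t1 + t2"
  have l: "l > 0" using t unfolding l_def by simp
  have "(t1/l) *\<^sub>R (c + (1/t1) *\<^sub>R u) + (t2/l) *\<^sub>R (c + (1/t2) *\<^sub>R v) \<in> K"
    by (rule convexD[OF cvx t(3) t(4)]) (use t l in \<open>auto simp: l_def add_divide_distrib[symmetric]\<close>)
  moreover have "(t1/l) *\<^sub>R (c + (1/t1) *\<^sub>R u) + (t2/l) *\<^sub>R (c + (1/t2) *\<^sub>R v)
      = c + (1/l) *\<^sub>R (u + v)"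
  proof -
    have "(t1/l) *\<^sub>R (c + (1/t1) *\<^sub>R u) + (t2/l) *\<^sub>R (c + (1/t2) *\<^sub>R v)
        = ((t1 + t2)/l) *\<^sub>R c + (1/l) *\<^sub>R u + (1/l) *\<^sub>R v"
      using t by (simp add: scaleR_add_right scaleR_add_left add_divide_distrib)
    also have "\<dots> = c + (1/l) *\<^sub>R (u + v)" using l by (simp add: l_def scaleR_add_right)
    finally show ?thesis .
  qed
  ultimately show ?thesis using l unfolding T_def l_def by simp
qed

lemma G_sub: "G (u + v) \<le> G u + G v"
proof -
  have "G (u + v) - G v \<le> G u"
  proof (rule G_ge)
    fix t1 assume t1: "t1 \<in> T u"
    have "G (u + v) - t1 \<le> G v"
    proof (rule G_ge)
      fix t2 assume "t2 \<in> T v"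
      then have "G (u + v) \<le> t1 + t2" using G_le T_add t1 by blast
      then show "G (u + v) - t1 \<le> t2" by simp
    qed
    then show "G (u + v) - G v \<le> t1" by simp
  qed
  then show ?thesis by simp
qed

lemma G_lip: "dist (G u) (G v) \<le> (1/r) * dist u v"
proof -
  have "G u \<le> G v + G (u - v)" using G_sub[of v "u - v"] by simp
  moreover have "G v \<le> G u + G (v - u)" using G_sub[of u "v - u"] by simp
  moreover have "G (u - v) \<le> norm (u - v) / r" "G (v - u) \<le> norm (u - v) / r"
    using G_upper[of "u - v"] G_upper[of "v - u"] by (simp_all add: norm_minus_commute)
  ultimately show ?thesis by (simp add: dist_norm dist_real_def abs_le_iff)
qed

lemma G_cont: "continuous_on A G"
  by (rule lipschitz_on_continuous_on[of "1/r"], rule lipschitz_onI) (use G_lip rpos in auto)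

lemma G_lt1: assumes "G v < 1" shows "c + v \<in> K"
proof -
  obtain t where t: "t \<in> T v" "t < 1"
    using assms cInf_less_iff[OF T_ne T_bdd] unfolding G_def by blast
  then have t': "t > 0" "c + (1/t) *\<^sub>R v \<in> K" unfolding T_def by auto
  have "(1 - t) *\<^sub>R c + t *\<^sub>R (c + (1/t) *\<^sub>R v) \<in> K"
    by (rule convexD[OF cvx cK t'(2)]) (use t t' in auto)
  moreover have "(1 - t) *\<^sub>R c + t *\<^sub>R (c + (1/t) *\<^sub>R v) = c + v" using t'
    by (simp add: algebra_simps)
  ultimately show ?thesis by simp
qed

lemma G_le1: assumes "G v \<le> 1" shows "c + v \<in> K"
proof -
  have "c + v \<in> closure K"
    unfolding closure_approachable
  proof (intro allI impI)
    fix d :: real assume d: "d > 0"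
    define q where "q = min 1 (d / (2 * (norm v + 1)))"
    have "norm v \<ge> 0" by simp
    then have "0 < 2 * norm v + 2" by linarith
    then have "2 * (norm v + 1) > 0" by (simp add: algebra_simps)
    then have "d / (2 * (norm v + 1)) > 0" using d by (rule divide_pos_pos[rotated])
    then have q: "0 < q" "q \<le> 1" unfolding q_def by auto
    have "G ((1 - q) *\<^sub>R v) \<le> (1 - q) * G v" using G_scale q by simp
    also have "\<dots> \<le> (1 - q) * 1" using assms q by (intro mult_left_mono) auto
    also have "\<dots> < 1" using q by simp
    finally have "c + (1 - q) *\<^sub>R v \<in> K" by (rule G_lt1)
    moreover have "dist (c + (1 - q) *\<^sub>R v) (c + v) < d"
    proof -
      have "dist (c + (1 - q) *\<^sub>R v) (c + v) = q * norm v" using q by (simp add: dist_norm algebra_simps)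
      also have "\<dots> \<le> d / (2 * (norm v + 1)) * norm v" by (rule mult_right_mono) (auto simp: q_def)
      also have "\<dots> < d"
      proof -
        have p0: "0 < 2 * norm v + 2" "norm v < 2 * norm v + 2" using norm_ge_zero[of v] by linarith+
        have p: "2 * (norm v + 1) > 0" "norm v < 2 * (norm v + 1)" using p0 by (simp_all add: algebra_simps)
        have "norm v / (2 * (norm v + 1)) < 1" using p by (subst divide_less_eq_1_pos[OF p(1)])
        then have "d * (norm v / (2 * (norm v + 1))) < d * 1" using d by (intro mult_strict_left_mono) auto
        then show ?thesis by simp
      qed
      finally show ?thesis .
    qed
    ultimately show "\<exists>x\<in>K. dist x (c + v) < d" by blast
  qed
  then show ?thesis using clK by (simp add: closure_closed)
qed

end

locale csetup = gsetup +
  fixes e :: "nat \<Rightarrow> real^2" and \<eta> :: real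
  assumes eta: "\<eta> > 0"
begin

definition w :: "nat \<Rightarrow> real" where "w k = (1/2)^k / (1 + norm (e k))"
definition adm :: "(nat \<Rightarrow> real) \<Rightarrow> bool" where "adm b \<longleftrightarrow> (\<forall>k. 0 \<le> b k \<and> b k \<le> w k)"
definition Psi :: "(nat \<Rightarrow> real) \<Rightarrow> real^2 \<Rightarrow> real" where "Psi b v = (\<Sum>k. b k * \<bar>e k \<bullet> v\<bar>)"

lemma w_pos: "w k > 0"
proof -
  have "1 + norm (e k) > 0" using norm_ge_zero[of "e k"] by linarith
  then show ?thesis unfolding w_def by simp
qed

lemma adm_w: "adm w" using w_pos unfolding adm_def by (simp add: less_imp_le)

lemma adm_upd: "adm (w(k := 0))" using w_pos unfolding adm_def by (simp add: less_imp_le)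

lemma w_norm: "w k * norm (e k) \<le> (1/2)^k"
proof -
  have p: "1 + norm (e k) > 0" using norm_ge_zero[of "e k"] by linarith
  have "norm (e k) / (1 + norm (e k)) \<le> 1" using p by simp
  then have "(1/2)^k * (norm (e k) / (1 + norm (e k))) \<le> (1/2)^k * 1"
    by (intro mult_left_mono) auto
  then show ?thesis unfolding w_def by simp
qed

lemma term_bound:
  assumes "adm b" shows "norm (b k * \<bar>e k \<bullet> v\<bar>) \<le> (1/2)^k * norm v"
proof -
  have b: "0 \<le> b k" "b k \<le> w k" using assms unfolding adm_def by auto
  have "norm (b k * \<bar>e k \<bullet> v\<bar>) = b k * \<bar>e k \<bullet> v\<bar>" using b by simp
  also have "\<dots> \<le> w k * (norm (e k) * norm v)"
    using b Cauchy_Schwarz_ineq2[of "e k" v] by (intro mult_mono) auto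
  also have "\<dots> = (w k * norm (e k)) * norm v" by simp
  also have "\<dots> \<le> (1/2)^k * norm v" using w_norm by (intro mult_right_mono) auto
  finally show ?thesis .
qed

lemma geo_summable: "summable (\<lambda>k. (1/2::real)^k * x)"
  by (intro summable_mult2 summable_geometric) simp

lemma geo_sum: "(\<Sum>k. (1/2::real)^k * x) = 2 * x"
proof -
  have "(\<Sum>k. (1/2::real)^k * x) = (\<Sum>k. (1/2::real)^k) * x"
    by (rule suminf_mult2[symmetric]) (rule summable_geometric, simp)
  also have "(\<Sum>k. (1/2::real)^k) = 2" by (subst suminf_geometric) simp_all
  finally show ?thesis by simp
qed

lemma Psi_summable: "adm b \<Longrightarrow> summable (\<lambda>k. b k * \<bar>e k \<bullet> v\<bar>)"
  by (rule summable_comparison_test'[OF geo_summable[of "norm v"]]) (rule term_bound)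

lemma Psi_nonneg: "adm b \<Longrightarrow> 0 \<le> Psi b v"
  unfolding Psi_def by (rule suminf_nonneg[OF Psi_summable]) (auto simp: adm_def)

lemma Psi_le: assumes "adm b" shows "Psi b v \<le> 2 * norm v"
proof -
  have "Psi b v \<le> (\<Sum>k. (1/2::real)^k * norm v)"
    unfolding Psi_def
  proof (rule suminf_le[OF _ Psi_summable[OF assms] geo_summable])
    fix k
    show "b k * \<bar>e k \<bullet> v\<bar> \<le> (1/2)^k * norm v"
      by (rule order_trans[OF abs_ge_self]) (use term_bound[OF assms, of k v] in simp)
  qed
  then show ?thesis using geo_sum by simp
qed

lemma Psi_zero: "Psi b 0 = 0" unfolding Psi_def by simp

lemma Psi_scale: assumes "adm b" "0 \<le> s" shows "Psi b (s *\<^sub>R v) = s * Psi b v"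
proof -
  have "(\<lambda>k. b k * \<bar>e k \<bullet> (s *\<^sub>R v)\<bar>) = (\<lambda>k. s * (b k * \<bar>e k \<bullet> v\<bar>))"
    using assms(2) by (auto simp: abs_mult)
  then show ?thesis unfolding Psi_def using suminf_mult[OF Psi_summable[OF assms(1)]] by simp
qed

lemma Psi_sub: assumes "adm b" shows "Psi b (u + v) \<le> Psi b u + Psi b v"
proof -
  have "Psi b u + Psi b v = (\<Sum>k. b k * \<bar>e k \<bullet> u\<bar> + b k * \<bar>e k \<bullet> v\<bar>)"
    unfolding Psi_def by (rule suminf_add[OF Psi_summable[OF assms] Psi_summable[OF assms]])
  moreover have "Psi b (u + v) \<le> (\<Sum>k. b k * \<bar>e k \<bullet> u\<bar> + b k * \<bar>e k \<bullet> v\<bar>)"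
    unfolding Psi_def
  proof (rule suminf_le)
    fix k
    have "\<bar>e k \<bullet> (u + v)\<bar> \<le> \<bar>e k \<bullet> u\<bar> + \<bar>e k \<bullet> v\<bar>" by (simp add: inner_add_right abs_triangle_ineq)
    then have "b k * \<bar>e k \<bullet> (u + v)\<bar> \<le> b k * (\<bar>e k \<bullet> u\<bar> + \<bar>e k \<bullet> v\<bar>)"
      using assms unfolding adm_def by (intro mult_left_mono) auto
    then show "b k * \<bar>e k \<bullet> (u + v)\<bar> \<le> b k * \<bar>e k \<bullet> u\<bar> + b k * \<bar>e k \<bullet> v\<bar>" by (simp add: distrib_left)
  qed (intro Psi_summable[OF assms] summable_add)+
  ultimately show ?thesis by simp
qed

lemma Psi_lip: assumes "adm b" shows "dist (Psi b u) (Psi b v) \<le> 2 * dist u v"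
proof -
  have "Psi b u \<le> Psi b v + Psi b (u - v)" using Psi_sub[OF assms, of v "u - v"] by simp
  moreover have "Psi b v \<le> Psi b u + Psi b (v - u)" using Psi_sub[OF assms, of u "v - u"] by simp
  moreover have "Psi b (u - v) \<le> 2 * norm (u - v)" "Psi b (v - u) \<le> 2 * norm (u - v)"
    using Psi_le[OF assms, of "u - v"] Psi_le[OF assms, of "v - u"] by (simp_all add: norm_minus_commute)
  ultimately show ?thesis by (simp add: dist_norm dist_real_def abs_le_iff)
qed

lemma Psi_cont: "adm b \<Longrightarrow> continuous_on A (Psi b)"
  by (rule lipschitz_on_continuous_on[of 2], rule lipschitz_onI) (use Psi_lip in auto)

lemma Psi_split: "Psi w v = Psi (w(k := 0)) v + w k * \<bar>e k \<bullet> v\<bar>"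
proof -
  have s1: "(\<lambda>j. (w(k := 0)) j * \<bar>e j \<bullet> v\<bar>) sums Psi (w(k := 0)) v"
    unfolding Psi_def by (rule summable_sums[OF Psi_summable[OF adm_upd]])
  have s2: "(\<lambda>j. if j = k then w j * \<bar>e j \<bullet> v\<bar> else 0) sums (w k * \<bar>e k \<bullet> v\<bar>)"
    by (rule sums_single)
  have "(\<lambda>j. (w(k := 0)) j * \<bar>e j \<bullet> v\<bar> + (if j = k then w j * \<bar>e j \<bullet> v\<bar> else 0))
      sums (Psi (w(k := 0)) v + w k * \<bar>e k \<bullet> v\<bar>)" by (rule sums_add[OF s1 s2])
  moreover have "(\<lambda>j. (w(k := 0)) j * \<bar>e j \<bullet> v\<bar> + (if j = k then w j * \<bar>e j \<bullet> v\<bar> else 0))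
      = (\<lambda>j. w j * \<bar>e j \<bullet> v\<bar>)" by auto
  ultimately show ?thesis unfolding Psi_def[of w] by (simp add: sums_iff)
qed

definition Q :: "(nat \<Rightarrow> real) \<Rightarrow> real^2 \<Rightarrow> real" where "Q b v = G v + \<eta> * Psi b v"

lemma Q_cont: "adm b \<Longrightarrow> continuous_on A (Q b)"
  unfolding Q_def by (intro continuous_intros G_cont Psi_cont)

lemma Q_nonneg: "adm b \<Longrightarrow> 0 \<le> Q b v"
  unfolding Q_def using G_nonneg Psi_nonneg eta by (simp add: add_nonneg_nonneg)

lemma Q_zero: "Q b 0 = 0" unfolding Q_def by (simp add: G_zero Psi_zero)

lemma Q_scale: "adm b \<Longrightarrow> 0 \<le> s \<Longrightarrow> Q b (s *\<^sub>R v) \<le> s * Q b v"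
  unfolding Q_def using G_scale[of s v] Psi_scale[of b s v] by (simp add: algebra_simps)

lemma Q_sub: assumes "adm b" shows "Q b (u + v) \<le> Q b u + Q b v"
proof -
  have "\<eta> * Psi b (u + v) \<le> \<eta> * (Psi b u + Psi b v)"
    using Psi_sub[OF assms, of u v] eta by (intro mult_left_mono) auto
  then show ?thesis unfolding Q_def using G_sub[of u v] by (simp add: algebra_simps)
qed

lemma Q_upper: "adm b \<Longrightarrow> Q b v \<le> (1/r + 2 * \<eta>) * norm v"
proof -
  assume b: "adm b"
  have "G v \<le> norm v / r" by (rule G_upper)
  moreover have "\<eta> * Psi b v \<le> \<eta> * (2 * norm v)" using Psi_le[OF b] eta by (intro mult_left_mono) auto
  ultimately show ?thesis unfolding Q_def by (simp add: algebra_simps)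
qed

lemma Q_comb: assumes "adm b" "0 \<le> p" "0 \<le> q"
  shows "Q b (p *\<^sub>R u + q *\<^sub>R v) \<le> p * Q b u + q * Q b v"
  using Q_sub[OF assms(1), of "p *\<^sub>R u" "q *\<^sub>R v"] Q_scale[OF assms(1,2), of u] Q_scale[OF assms(1,3), of v]
  by simp

lemma Q_split: "Q w v = Q (w(k := 0)) v + \<eta> * w k * \<bar>e k \<bullet> v\<bar>"
  unfolding Q_def using Psi_split[of v k] by (simp add: algebra_simps)

definition S :: "(real^2) set" where "S = {x. Q w (x - c) \<le> 1}"

lemma convex_sub: assumes "adm b" shows "convex {x. Q b (x - c) \<le> 1}" "convex {x. Q b (x - c) < 1}"
proof -
  have key: "Q b (p *\<^sub>R x + q *\<^sub>R y - c) \<le> p * Q b (x - c) + q * Q b (y - c)"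
    if "0 \<le> p" "0 \<le> q" "p + q = 1" for x y p q
  proof -
    have "p *\<^sub>R (x - c) + q *\<^sub>R (y - c) = p *\<^sub>R x + q *\<^sub>R y - (p + q) *\<^sub>R c"
      by (simp add: algebra_simps)
    then have "p *\<^sub>R x + q *\<^sub>R y - c = p *\<^sub>R (x - c) + q *\<^sub>R (y - c)" using that(3) by simp
    then show ?thesis using Q_comb[OF assms that(1,2)] by simp
  qed
  show "convex {x. Q b (x - c) \<le> 1}"
  proof (rule convexI)
    fix x y p q assume h: "x \<in> {x. Q b (x - c) \<le> 1}" "y \<in> {x. Q b (x - c) \<le> 1}" "0 \<le> (p::real)" "0 \<le> q" "p + q = 1"
    have "p * Q b (x - c) + q * Q b (y - c) \<le> p * 1 + q * 1"
      using h by (intro add_mono mult_left_mono) auto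
    then show "p *\<^sub>R x + q *\<^sub>R y \<in> {x. Q b (x - c) \<le> 1}" using key[OF h(3-5), of x y] h(5) by simp
  qed
  show "convex {x. Q b (x - c) < 1}"
  proof (rule convexI)
    fix x y p q assume h: "x \<in> {x. Q b (x - c) < 1}" "y \<in> {x. Q b (x - c) < 1}" "0 \<le> (p::real)" "0 \<le> q" "p + q = 1"
    have "p * Q b (x - c) + q * Q b (y - c) < 1"
    proof (cases "p = 0")
      case True then show ?thesis using h by simp
    next
      case False
      then have "p > 0" using h by simp
      then have "p * Q b (x - c) < p * 1" using h by simp
      moreover have "q * Q b (y - c) \<le> q * 1" using h by (intro mult_left_mono) auto
      ultimately show ?thesis using h(5) by simp
    qed
    then show "p *\<^sub>R x + q *\<^sub>R y \<in> {x. Q b (x - c) < 1}" using key[OF h(3-5), of x y] by simp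
  qed
qed

lemma S_convex: "convex S" unfolding S_def by (rule convex_sub(1)[OF adm_w])

lemma S_closed: "closed S"
  unfolding S_def
  by (intro closed_Collect_le continuous_intros continuous_on_compose2[OF Q_cont[OF adm_w]]) auto

lemma S_sub: "S \<subseteq> K"
proof
  fix x assume "x \<in> S"
  then have "Q w (x - c) \<le> 1" unfolding S_def by simp
  moreover have "0 \<le> \<eta> * Psi w (x - c)" using eta Psi_nonneg[OF adm_w, of "x - c"] by simp
  ultimately have "G (x - c) \<le> 1" unfolding Q_def by linarith
  then have "c + (x - c) \<in> K" by (rule G_le1)
  then show "x \<in> K" by simp
qed

lemma K_bounded: "bounded K"
  unfolding bounded_iff
proof (intro exI[of _ "M + norm c"] ballI)
  fix k assume "k \<in> K"
  then have "norm (k - c) \<le> M" by (rule bnd)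
  moreover have "norm k \<le> norm c + norm (k - c)" by (rule norm_triangle_sub)
  ultimately show "norm k \<le> M + norm c" by linarith
qed

lemma S_compact: "compact S"
  using S_closed bounded_subset[OF K_bounded S_sub] by (simp add: compact_eq_bounded_closed)

lemma c_int: "c \<in> interior S"
proof (rule interiorI)
  show "open {x. Q w (x - c) < 1}"
    by (intro open_Collect_less continuous_intros continuous_on_compose2[OF Q_cont[OF adm_w]]) auto
  show "c \<in> {x. Q w (x - c) < 1}" using Q_zero by simp
  show "{x. Q w (x - c) < 1} \<subseteq> S" unfolding S_def by auto
qed

lemma S_big: assumes k: "k \<in> K" shows "c + (1 / (1 + 2 * \<eta> * M)) *\<^sub>R (k - c) \<in> S"
proof -
  define l where "l = 1 / (1 + 2 * \<eta> * M)"
  have den: "1 + 2 * \<eta> * M > 0" using eta Mpos by (simp add: add_pos_pos)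
  have l: "l > 0" unfolding l_def using den by simp
  have "1 \<in> T (k - c)" unfolding T_def using k by simp
  then have G1: "G (k - c) \<le> 1" by (rule G_le)
  have "Q w (k - c) \<le> 1 + \<eta> * (2 * M)"
  proof -
    have "Psi w (k - c) \<le> 2 * M" using Psi_le[OF adm_w, of "k - c"] bnd[OF k] by simp
    then have "\<eta> * Psi w (k - c) \<le> \<eta> * (2 * M)" using eta by (intro mult_left_mono) auto
    then show ?thesis unfolding Q_def using G1 by simp
  qed
  then have "l * Q w (k - c) \<le> l * (1 + \<eta> * (2 * M))" using l by (intro mult_left_mono) auto
  then have "Q w (l *\<^sub>R (k - c)) \<le> l * (1 + 2 * \<eta> * M)"
    using Q_scale[OF adm_w, of l "k - c"] l by (simp add: algebra_simps)
  also have "\<dots> = 1" unfolding l_def using den by simp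
  finally show ?thesis unfolding S_def l_def by simp
qed

end

context csetup begin

lemma S_corner:
  assumes z: "z \<in> frontier S" and ez: "e k \<bullet> (z - c) = 0" and e0: "e k \<noteq> 0"
  shows "corner S z"
proof -
  have zS: "z \<in> S" using z frontier_subset_closed[OF S_closed] by blast
  have openS: "open {x. Q w (x - c) < 1}"
    by (intro open_Collect_less continuous_intros continuous_on_compose2[OF Q_cont[OF adm_w]]) auto
  have Qz: "Q w (z - c) = 1"
  proof (rule ccontr)
    assume "Q w (z - c) \<noteq> 1"
    then have "Q w (z - c) < 1" using zS unfolding S_def by simp
    then have "z \<in> interior S"
      by (intro interiorI[OF openS]) (auto simp: S_def)
    then show False using z unfolding frontier_def by simp
  qed
  define b where "b = w(k := 0)"
  have admb: "adm b" unfolding b_def by (rule adm_upd)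
  have Qbz: "Q b (z - c) = 1" using Qz Q_split[of "z - c" k] ez unfolding b_def by simp
  define U where "U = {x. Q b (x - c) < 1}"
  have "convex ((\<lambda>x. x - z) ` U)"
    unfolding U_def by (rule convex_translation_subtract[OF convex_sub(2)[OF admb]])
  moreover have "0 \<notin> (\<lambda>x. x - z) ` U" using Qbz unfolding U_def by auto
  ultimately obtain a where a: "a \<noteq> 0" "\<forall>x\<in>(\<lambda>x. x - z) ` U. 0 \<le> a \<bullet> x"
    using separating_hyperplane_set_0 by blast
  define q where "q = - a"
  have q0: "q \<noteq> 0" using a(1) unfolding q_def by simp
  have hq: "q \<bullet> (x - z) \<le> 0" if "x \<in> U" for x using a(2) that unfolding q_def by auto
  define \<beta> where "\<beta> = q \<bullet> (z - c)"
  define A where "A = (1/r + 2 * \<eta>) * norm q"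
  have A0: "A \<ge> 0" unfolding A_def using rpos eta by simp
  define t where "t = 1 / (A + 1)"
  have t0: "t > 0" unfolding t_def using A0 by simp
  have "Q b (t *\<^sub>R q) \<le> (1/r + 2 * \<eta>) * norm (t *\<^sub>R q)" by (rule Q_upper[OF admb])
  also have "\<dots> = A * t" unfolding A_def using t0 by simp
  also have "\<dots> < 1" unfolding t_def using A0 by (simp add: divide_less_eq)
  finally have "c + t *\<^sub>R q \<in> U" unfolding U_def by simp
  then have "q \<bullet> (c + t *\<^sub>R q - z) \<le> 0" by (rule hq)
  then have "t * (q \<bullet> q) \<le> \<beta>" unfolding \<beta>_def by (simp add: inner_diff_right inner_add_right)
  moreover have "t * (q \<bullet> q) > 0" using t0 q0 by simp
  ultimately have bpos: "\<beta> > 0" by simp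
  have key: "q \<bullet> (x - c) \<le> \<beta> * Q b (x - c)" for x
  proof (rule ccontr)
    define \<gamma> where "\<gamma> = q \<bullet> (x - c)"
    define \<phi> where "\<phi> = Q b (x - c)"
    assume "\<not> q \<bullet> (x - c) \<le> \<beta> * Q b (x - c)"
    then have g: "\<gamma> > \<beta> * \<phi>" unfolding \<gamma>_def \<phi>_def by simp
    have ph0: "\<phi> \<ge> 0" unfolding \<phi>_def by (rule Q_nonneg[OF admb])
    have bp0: "\<beta> * \<phi> \<ge> 0" using bpos ph0 by simp
    have gpos: "\<gamma> > 0" using g bp0 by simp
    define l where "l = 2 * \<beta> / (\<gamma> + \<beta> * \<phi>)"
    have den: "\<gamma> + \<beta> * \<phi> > 0" using gpos bp0 by simp
    have l0: "l > 0" unfolding l_def using bpos den by simp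
    have "Q b (l *\<^sub>R (x - c)) \<le> l * \<phi>" unfolding \<phi>_def using Q_scale[OF admb, of l] l0 by simp
    also have "l * \<phi> < 1"
    proof -
      have "2 * (\<beta> * \<phi>) < \<gamma> + \<beta> * \<phi>" using g by simp
      then show ?thesis unfolding l_def using den by (simp add: divide_less_eq)
    qed
    finally have "c + l *\<^sub>R (x - c) \<in> U" unfolding U_def by simp
    then have "q \<bullet> (c + l *\<^sub>R (x - c) - z) \<le> 0" by (rule hq)
    then have "l * \<gamma> \<le> \<beta>" unfolding \<gamma>_def \<beta>_def
      by (simp add: inner_diff_right inner_add_right)
    moreover have "l * \<gamma> > \<beta>"
    proof -
      have "\<beta> * (\<gamma> + \<beta> * \<phi>) < 2 * \<beta> * \<gamma>" using g bpos
        by (simp add: algebra_simps mult_strict_left_mono)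
      then show ?thesis unfolding l_def using den by (simp add: less_divide_eq mult.commute)
    qed
    ultimately show False by simp
  qed
  define v where "v s = (1/\<beta>) *\<^sub>R q + (s * \<eta> * w k) *\<^sub>R e k" for s :: real
  have vz: "v s \<bullet> (z - c) = 1" for s
    unfolding v_def using ez bpos by (simp add: inner_add_left \<beta>_def)
  have vS: "\<forall>x\<in>S. v s \<bullet> (x - z) \<le> 0" if s: "\<bar>s\<bar> \<le> 1" for s
  proof
    fix x assume x: "x \<in> S"
    have ew: "\<eta> * w k \<ge> 0" using eta w_pos[of k] by simp
    have "v s \<bullet> (x - z) = v s \<bullet> (x - c) - v s \<bullet> (z - c)" by (simp add: inner_diff_right)
    also have "\<dots> = (1/\<beta>) * (q \<bullet> (x - c)) + s * (\<eta> * w k) * (e k \<bullet> (x - c)) - 1"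
      using vz unfolding v_def by (simp add: inner_add_left)
    also have "\<dots> \<le> Q b (x - c) + \<eta> * w k * \<bar>e k \<bullet> (x - c)\<bar> - 1"
    proof -
      have "(1/\<beta>) * (q \<bullet> (x - c)) \<le> Q b (x - c)"
        using key[of x] bpos by (simp add: divide_le_eq mult.commute)
      moreover have "s * (\<eta> * w k) * (e k \<bullet> (x - c)) \<le> \<eta> * w k * \<bar>e k \<bullet> (x - c)\<bar>"
      proof -
        have "s * (e k \<bullet> (x - c)) \<le> \<bar>s * (e k \<bullet> (x - c))\<bar>" by simp
        also have "\<dots> = \<bar>s\<bar> * \<bar>e k \<bullet> (x - c)\<bar>" by (simp add: abs_mult)
        also have "\<dots> \<le> 1 * \<bar>e k \<bullet> (x - c)\<bar>" using s by (intro mult_right_mono) auto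
        finally have "s * (e k \<bullet> (x - c)) \<le> \<bar>e k \<bullet> (x - c)\<bar>" by simp
        then have "(\<eta> * w k) * (s * (e k \<bullet> (x - c))) \<le> (\<eta> * w k) * \<bar>e k \<bullet> (x - c)\<bar>"
          using ew by (intro mult_left_mono) auto
        then show ?thesis by (simp add: algebra_simps)
      qed
      ultimately show ?thesis by simp
    qed
    also have "\<dots> = Q w (x - c) - 1" using Q_split[of "x - c" k] unfolding b_def by simp
    also have "\<dots> \<le> 0" using x unfolding S_def by simp
    finally show "v s \<bullet> (x - z) \<le> 0" .
  qed
  have v1: "v 1 \<noteq> 0" using vz[of 1] by auto
  have v2: "v (-1) \<noteq> 0" using vz[of "-1"] by auto
  have v12: "\<forall>\<mu>>0. v 1 \<noteq> \<mu> *\<^sub>R v (-1)"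
  proof (intro allI impI)
    fix \<mu> :: real assume mu: "\<mu> > 0"
    show "v 1 \<noteq> \<mu> *\<^sub>R v (-1)"
    proof
      assume eq: "v 1 = \<mu> *\<^sub>R v (-1)"
      have "1 = \<mu> * 1" using arg_cong[OF eq, of "\<lambda>u. u \<bullet> (z - c)"] vz by simp
      then have "\<mu> = 1" by simp
      with eq have "v 1 = v (-1)" by simp
      then have "(2 * (\<eta> * w k)) *\<^sub>R e k = 0" unfolding v_def by (simp add: algebra_simps scaleR_left_distrib[symmetric])
      moreover have "2 * (\<eta> * w k) \<noteq> 0" using eta w_pos[of k] by simp
      ultimately show False using e0 by simp
    qed
  qed
  show ?thesis unfolding corner_def
    using vS[of 1] vS[of "-1"] v1 v2 v12 by (intro exI[of _ "v 1"] exI[of _ "v (-1)"]) auto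
qed

end

lemma hausdorff_le:
  fixes A B :: "'a::metric_space set"
  assumes "A \<noteq> {}" "B \<noteq> {}" "B \<subseteq> A" "\<And>a. a \<in> A \<Longrightarrow> \<exists>b\<in>B. dist a b \<le> \<delta>" "0 \<le> \<delta>"
  shows "hausdorff_dist A B \<le> \<delta>"
  unfolding hausdorff_dist_def
proof (rule max.boundedI)
  show "(SUP a\<in>A. infdist a B) \<le> \<delta>"
  proof (rule cSUP_least[OF assms(1)])
    fix a assume "a \<in> A"
    then obtain b where "b \<in> B" "dist a b \<le> \<delta>" using assms(4) by blast
    then show "infdist a B \<le> \<delta>" by (rule infdist_le2)
  qed
  show "(SUP b\<in>B. infdist b A) \<le> \<delta>"
  proof (rule cSUP_least[OF assms(2)])
    fix b assume "b \<in> B"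
    then have "b \<in> A" using assms(3) by blast
    then show "infdist b A \<le> \<delta>" using assms(5) by simp
  qed
qed

theorem theorem3:
  fixes K :: "(real^2) set" and \<epsilon> :: real
  assumes "compact K" "convex K" "interior K \<noteq> {}" "\<epsilon> > 0"
  shows "\<exists>K' :: (real^2) set. compact K' \<and> convex K' \<and> interior K' \<noteq> {} \<and>
           hausdorff_dist K K' < \<epsilon> \<and>
           future_cauchy_horizon K' \<subseteq> closure (nondiff_points (future_cauchy_horizon K'))"
proof -
  obtain c where c: "c \<in> interior K" using assms(3) by auto
  obtain r where r: "r > 0" "ball c r \<subseteq> K" using c mem_interior by blast
  have "bounded K" using assms(1) by (rule compact_imp_bounded)
  then obtain B0 where B0: "B0 > 0" "\<And>x. x \<in> K \<Longrightarrow> norm x \<le> B0" unfolding bounded_pos by blast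
  define M where "M = B0 + norm c"
  have Mpos: "M > 0" unfolding M_def using B0 by (simp add: add_pos_nonneg)
  have bnd: "norm (k - c) \<le> M" if "k \<in> K" for k
    using norm_triangle_ineq4[of k c] B0(2)[OF that] unfolding M_def by linarith
  obtain E :: "(real^2) set" where E: "countable E" "\<And>U. open U \<Longrightarrow> U \<noteq> {} \<Longrightarrow> \<exists>d\<in>E. d \<in> U"
    using countable_dense_exists by blast
  have Ene: "E \<noteq> {}" using E(2)[of UNIV] by auto
  define e where "e = from_nat_into E"
  define \<eta> where "\<eta> = \<epsilon> / (4 * M * M)"
  have "4 * M * M > 0" using Mpos by simp
  then have eta: "\<eta> > 0" unfolding \<eta>_def using assms(4) by (rule divide_pos_pos[rotated])
  interpret cs: csetup K c r M e \<eta>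
    by unfold_locales (use assms(2) compact_imp_closed[OF assms(1)] r Mpos bnd eta in auto)
  have Sc: "compact cs.S" by (rule cs.S_compact)
  have Scv: "convex cs.S" by (rule cs.S_convex)
  have Sint: "interior cs.S \<noteq> {}" using cs.c_int by blast
  have Scl: "closed cs.S" by (rule cs.S_closed)
  have SU: "cs.S \<noteq> UNIV"
  proof
    assume "cs.S = UNIV"
    then have "bounded (UNIV::(real^2) set)" using compact_imp_bounded[OF Sc] by simp
    then show False using not_bounded_UNIV by blast
  qed
  have corners: "corner cs.S z" if dd: "d \<in> E" "d \<noteq> 0" "z \<in> frontier cs.S" "d \<bullet> (z - c) = 0" for d z
  proof -
    obtain k where "e k = d" using from_nat_into_surj[OF E(1) dd(1)] unfolding e_def by blast
    then show ?thesis using cs.S_corner[of z k] dd by simp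
  qed
  have dens: "interior cs.S \<subseteq> closure {y \<in> interior cs.S. \<not> dS cs.S differentiable (at y)}"
    by (rule core_density[OF Sc Scv cs.c_int E(2) corners]) auto
  have H: "future_cauchy_horizon cs.S \<subseteq> closure (nondiff_points (future_cauchy_horizon cs.S))"
    by (rule horizon_from_density[OF Scl SU Scv Sint dens])
  define l where "l = 1 / (1 + 2 * \<eta> * M)"
  have den: "1 + 2 * \<eta> * M > 0" using eta Mpos by (simp add: add_pos_pos)
  have l: "0 < l" "l \<le> 1" unfolding l_def using den eta Mpos by auto
  have hd: "hausdorff_dist K cs.S \<le> (1 - l) * M"
  proof (rule hausdorff_le)
    show "K \<noteq> {}" using r by auto
    show "cs.S \<noteq> {}" using cs.c_int interior_subset by blast
    show "cs.S \<subseteq> K" by (rule cs.S_sub)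
    show "0 \<le> (1 - l) * M" using l Mpos by simp
    fix a assume a: "a \<in> K"
    have "c + l *\<^sub>R (a - c) \<in> cs.S" unfolding l_def by (rule cs.S_big[OF a])
    moreover have "dist a (c + l *\<^sub>R (a - c)) = (1 - l) * norm (a - c)"
    proof -
      have "a - (c + l *\<^sub>R (a - c)) = (1 - l) *\<^sub>R (a - c)" by (simp add: algebra_simps)
      then show ?thesis using l by (simp add: dist_norm)
    qed
    moreover have "(1 - l) * norm (a - c) \<le> (1 - l) * M" using bnd[OF a] l by (intro mult_left_mono) auto
    ultimately show "\<exists>b\<in>cs.S. dist a b \<le> (1 - l) * M" by (intro bexI[of _ "c + l *\<^sub>R (a - c)"]) simp_all
  qed
  have "(1 - l) * M < \<epsilon>"
  proof -
    have "1 - l = 2 * \<eta> * M / (1 + 2 * \<eta> * M)" unfolding l_def using den by (simp add: field_simps)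
    also have "\<dots> \<le> 2 * \<eta> * M" using den eta Mpos by (simp add: divide_le_eq)
    finally have "(1 - l) * M \<le> 2 * \<eta> * M * M" using Mpos by (simp add: mult_right_mono)
    also have "2 * \<eta> * M * M = \<epsilon> / 2" unfolding \<eta>_def using Mpos by simp
    finally show ?thesis using assms(4) by simp
  qed
  with hd have "hausdorff_dist K cs.S < \<epsilon>" by simp
  then show ?thesis using Sc Scv Sint H by blast
qed

end
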